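(* Let $\epsilon\ge0$ be fixed. Suppose $\mathcal V$ is a convex body in $\mathbb R^d$ and $V_\epsilon$ lies in the interior of $\mathcal V$. Suppose $\theta(v)=\max(\eta(v),\theta_0)$ for a continuously differentiable $\eta:\mathcal V\to\mathbb R$ whose gradient norm $\|\nabla\eta(v)\|$ is bounded away from zero on $$\partial V_\epsilon=\{v\in\mathcal V:\theta(v)-\theta_0=\eta(v)-\theta_0=\epsilon\}.$$ Then there exists $d_0>0$ such that, for all $v\notin V_\epsilon$, $$\theta(v)-\theta_0-\epsilon\ge\big(c\,d(v,V_\epsilon)\big)\wedge\delta,$$ with $$c=\tfrac12\inf_{v\in\partial V_\epsilon}\|\nabla\eta(v)\|>0,\qquad\delta=\inf_{d(v,V_\epsilon)\ge d_0}\big(\eta(v)-\theta_0-\epsilon\big)>0.$$ In other words, Condition V.2 holds with degree of identifiability $\rho(\epsilon)=1$.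
   Context: $\theta:\mathcal V\to\mathbb R$ has minimum value $\theta_0=\inf_{v\in\mathcal V}\theta(v)$. Put $V_\epsilon=\{v\in\mathcal V:\theta(v)\le\theta_0+\epsilon\}$ and $d(v,A)=\inf_{v'\in A}\|v-v'\|$. Condition V.2 means: there exist positive constants $\rho(\epsilon),c,\delta$ such that $\theta(v)-\theta_0-\epsilon\ge(c\,d(v,V_\epsilon))^{\rho(\epsilon)}\wedge\delta$ for all $v\notin V_\epsilon$. *)

theory Defs
  imports "HOL-Analysis.Analysis"
begin

definition theta_min :: "('a \<Rightarrow> real) \<Rightarrow> 'a set \<Rightarrow> real" where
  "theta_min \<theta> V = Inf (\<theta> ` V)"

definition sublevel :: "('a \<Rightarrow> real) \<Rightarrow> 'a set \<Rightarrow> real \<Rightarrow> 'a set" where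
  "sublevel \<theta> V \<epsilon> = {v \<in> V. \<theta> v \<le> theta_min \<theta> V + \<epsilon>}"

text \<open>The set called the boundary of V_eps in the paper:
  {v in V. theta v - theta_0 = eta v - theta_0 = eps}.\<close>
definition level_bd :: "('a \<Rightarrow> real) \<Rightarrow> ('a \<Rightarrow> real) \<Rightarrow> 'a set \<Rightarrow> real \<Rightarrow> 'a set" where
  "level_bd \<theta> \<eta> V \<epsilon> =
     {v \<in> V. \<theta> v - theta_min \<theta> V = \<epsilon> \<and> \<eta> v - theta_min \<theta> V = \<epsilon>}"

end

theory Submission
  imports Defs
begin

lemma descent:
  fixes \<eta> :: "'a::euclidean_space \<Rightarrow> real" and g :: "'a \<Rightarrow> 'a"
  assumes der: "\<forall>x\<in>ball p r. (\<eta> has_derivative (\<lambda>h. g x \<bullet> h)) (at x)"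
    and gc: "\<forall>x\<in>ball p r. norm (g x - g p) \<le> c/2" and gp: "2*c \<le> norm (g p)" and c: "c>0"
    and vp: "dist v p < r/2" and S: "0 \<le> S" "S \<le> r/2"
  shows "\<eta> (v - S *\<^sub>R (g p /\<^sub>R norm (g p))) \<le> \<eta> v - c*S"
proof -
  define n where "n = g p /\<^sub>R norm (g p)"
  have gp0: "norm (g p) > 0" using gp c by linarith
  have nn: "norm n = 1" using gp0 by (simp add: n_def)
  have gpn: "g p \<bullet> n = norm (g p)" using gp0 
    by (simp add: n_def inner_commute power2_norm_eq_inner[symmetric] power2_eq_square)
  define F where "F s = \<eta> (v - s *\<^sub>R n) + c * s" for s
  have "F S \<le> F 0"
  proof (rule DERIV_nonpos_imp_nonincreasing[OF S(1)])
    fix x assume x: "0 \<le> x" "x \<le> S"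
    let ?u = "v - x *\<^sub>R n"
    have "dist p ?u \<le> dist p v + dist v ?u" by (rule dist_triangle)
    also have "dist v ?u = x" using nn x by (simp add: dist_norm)
    finally have ub: "?u \<in> ball p r" using vp x S by (simp add: dist_commute)
    have d1: "((\<lambda>s. v - s *\<^sub>R n) has_derivative (\<lambda>h. - (h *\<^sub>R n))) (at x)"
      by (auto intro!: derivative_eq_intros)
    have d2: "((\<lambda>s. \<eta> (v - s *\<^sub>R n)) has_derivative (\<lambda>h. g ?u \<bullet> (- (h *\<^sub>R n)))) (at x)"
      using has_derivative_compose[OF d1, of \<eta> "\<lambda>h. g ?u \<bullet> h"] der ub by blast
    have d3: "(F has_derivative (\<lambda>h. g ?u \<bullet> (- (h *\<^sub>R n)) + c * h)) (at x)"
      unfolding F_def by (auto intro!: derivative_eq_intros d2)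
    have "DERIV F x :> (c - g ?u \<bullet> n)"
      unfolding has_field_derivative_def
      by (rule has_derivative_eq_rhs[OF d3]) (auto simp: algebra_simps)
    moreover have "c - g ?u \<bullet> n \<le> 0"
    proof -
      have "g ?u \<bullet> n = g p \<bullet> n + (g ?u - g p) \<bullet> n" by (simp add: algebra_simps)
      moreover have "\<bar>(g ?u - g p) \<bullet> n\<bar> \<le> norm (g ?u - g p) * norm n" by (rule Cauchy_Schwarz_ineq2)
      moreover have "norm (g ?u - g p) \<le> c/2" using gc ub by auto
      ultimately show ?thesis using gpn nn gp by auto
    qed
    ultimately show "\<exists>y. DERIV F x :> y \<and> y \<le> 0" by blast
  qed
  then show ?thesis by (simp add: F_def n_def)
qed

theorem lemma8:
  fixes V :: "'a::euclidean_space set"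
    and \<theta> \<eta> :: "'a \<Rightarrow> real"
    and g :: "'a \<Rightarrow> 'a"
    and \<epsilon> :: real
  assumes eps: "\<epsilon> \<ge> 0"
    and body: "compact V" "convex V" "interior V \<noteq> {}"
    and inside: "sublevel \<theta> V \<epsilon> \<subseteq> interior V"
    and theta: "\<forall>v\<in>V. \<theta> v = max (\<eta> v) (theta_min \<theta> V)"
    and deriv: "\<forall>v\<in>V. (\<eta> has_derivative (\<lambda>h. g v \<bullet> h)) (at v within V)"
    and C1: "continuous_on V g"
    and grad: "\<exists>m>0. \<forall>v\<in>level_bd \<theta> \<eta> V \<epsilon>. m \<le> norm (g v)"
  shows "\<exists>d0>0.
    (let \<theta>\<^sub>0 = theta_min \<theta> V;
         V\<^sub>\<epsilon> = sublevel \<theta> V \<epsilon>;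
         c = Inf ((\<lambda>v. norm (g v)) ` level_bd \<theta> \<eta> V \<epsilon>) / 2;
         \<delta> = Inf ((\<lambda>v. \<eta> v - \<theta>\<^sub>0 - \<epsilon>) ` {v \<in> V. infdist v V\<^sub>\<epsilon> \<ge> d0})
     in c > 0 \<and> {v \<in> V. infdist v V\<^sub>\<epsilon> \<ge> d0} \<noteq> {} \<and> \<delta> > 0 \<and>
        (\<forall>v \<in> V - V\<^sub>\<epsilon>. \<theta> v - \<theta>\<^sub>0 - \<epsilon> \<ge> min (c * infdist v V\<^sub>\<epsilon>) \<delta>))"
proof -
  define t0 where "t0 = theta_min \<theta> V"
  define Ve where "Ve = sublevel \<theta> V \<epsilon>"
  define K where "K = level_bd \<theta> \<eta> V \<epsilon>"
  define cc where "cc = Inf ((\<lambda>v. norm (g v)) ` K) / 2"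
  have Ve_def': "Ve = {v \<in> V. \<theta> v \<le> t0 + \<epsilon>}" by (simp add: Ve_def sublevel_def t0_def)
  have K_def': "K = {v \<in> V. \<theta> v - t0 = \<epsilon> \<and> \<eta> v - t0 = \<epsilon>}" by (simp add: K_def level_bd_def t0_def)
  have th: "\<And>v. v \<in> V \<Longrightarrow> \<theta> v = max (\<eta> v) t0" using theta t0_def by auto
  have Vne: "V \<noteq> {}" using body(3) interior_subset by blast
  have eta_cont: "continuous_on V \<eta>"
    using deriv has_derivative_continuous continuous_on_eq_continuous_within by blast
  have th_cont: "continuous_on V \<theta>"
  proof -
    have "continuous_on V (\<lambda>v. max (\<eta> v) t0)" by (intro continuous_intros eta_cont)
    then show ?thesis using continuous_on_cong th by (metis (no_types, lifting))
  qed
  have closedV: "closed V" using body(1) compact_imp_closed by blast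
  have Ve_eq: "Ve = \<theta> -` {..t0+\<epsilon>} \<inter> V" using Ve_def' by auto
  have closedVe: "closed Ve" unfolding Ve_eq by (intro closed_vimage_Int th_cont closedV) auto
  have "Ve = V \<inter> Ve" using Ve_def' by auto
  hence compVe: "compact Ve" using compact_Int_closed[OF body(1) closedVe] by simp
  obtain v0 where v0: "v0 \<in> V" "\<forall>y\<in>V. \<theta> v0 \<le> \<theta> y"
    using continuous_attains_inf[OF body(1) Vne th_cont] by blast
  have t0v0: "t0 = \<theta> v0" unfolding t0_def theta_min_def
    by (rule cInf_eq_minimum) (use v0 in auto)
  have v0Ve: "v0 \<in> Ve" using v0 t0v0 eps Ve_def' by auto
  hence Vene: "Ve \<noteq> {}" by auto
  have eta_v0: "\<eta> v0 \<le> t0" using th[OF v0(1)] t0v0 by linarith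
  have "\<exists>v\<in>V. v \<notin> interior V"
  proof (rule ccontr)
    assume c: "\<not> (\<exists>v\<in>V. v \<notin> interior V)"
    have "interior V \<inter> UNIV = {} \<or> (- V) \<inter> UNIV = {}"
      apply (rule connectedD[of UNIV "interior V" "- V"])
      using c interior_subset closedV by (auto intro: convex_connected simp: open_Compl)
    then have "V = UNIV" using c body(3) interior_subset by blast
    then have "bounded (UNIV::'a set)" using body(1) compact_imp_bounded by auto
    then show False by simp
  qed
  then obtain v1 where v1: "v1 \<in> V" "v1 \<notin> Ve" using inside Ve_def by blast
  have eta_v1: "\<eta> v1 > t0 + \<epsilon>" using v1 th[OF v1(1)] Ve_def' eps by auto
  have connV: "connected (\<eta> ` V)"
    using connected_continuous_image[OF eta_cont convex_connected[OF body(2)]] .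
  have "t0 + \<epsilon> \<in> \<eta> ` V"
    by (rule connectedD_interval[OF connV, of "\<eta> v0" "\<eta> v1"]) (use v0 v1 eta_v0 eta_v1 eps in auto)
  then obtain p0 where p0: "p0 \<in> V" "\<eta> p0 = t0 + \<epsilon>" by auto
  have p0K: "p0 \<in> K" using p0 th[OF p0(1)] eps K_def' by auto
  hence Kne: "K \<noteq> {}" by auto
  obtain m where m: "m > 0" "\<forall>v\<in>K. m \<le> norm (g v)" using grad K_def by blast
  have "m \<le> Inf ((\<lambda>v. norm (g v)) ` K)" by (rule cINF_greatest) (use Kne m in auto)
  hence cc_pos: "cc > 0" using m cc_def by simp
  have gK: "\<And>p. p \<in> K \<Longrightarrow> 2 * cc \<le> norm (g p)"
  proof -
    fix p assume "p \<in> K"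
    hence "Inf ((\<lambda>v. norm (g v)) ` K) \<le> norm (g p)"
      by (intro cINF_lower) (auto intro: bdd_belowI[where m=0])
    thus "2 * cc \<le> norm (g p)" by (simp add: cc_def)
  qed
  have KVe: "K \<subseteq> Ve" using K_def' Ve_def' by auto
  obtain r1 where r1: "r1 > 0" "(\<Union>x\<in>Ve. ball x r1) \<subseteq> interior V"
    using compact_subset_open_imp_ball_epsilon_subset[OF compVe open_interior inside[folded Ve_def]] by blast
  have "uniformly_continuous_on V g" by (rule compact_uniformly_continuous[OF C1 body(1)])
  then obtain r2 where r2: "r2 > 0" "\<forall>x\<in>V. \<forall>x'\<in>V. dist x' x < r2 \<longrightarrow> dist (g x') (g x) < cc/2"
    unfolding uniformly_continuous_on_def using cc_pos by (meson half_gt_zero)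
  define r where "r = min r1 r2"
  have r: "r > 0" using r1 r2 r_def by simp
  have iv1: "infdist v1 Ve > 0" by (rule infdist_pos_not_in_closed[OF closedVe Vene v1(2)])
  define d0 where "d0 = min (r/2) (infdist v1 Ve)"
  have d0: "d0 > 0" using r iv1 d0_def by simp
  define D where "D = {v \<in> V. infdist v Ve \<ge> d0}"
  define f where "f v = \<eta> v - t0 - \<epsilon>" for v
  define \<delta> where "\<delta> = Inf (f ` D)"
  have v1D: "v1 \<in> D" using v1 d0_def D_def by auto
  have D_eq: "D = (\<lambda>v. infdist v Ve) -` {d0..} \<inter> V" using D_def by auto
  have closedD: "closed D" unfolding D_eq
    by (intro closed_vimage_Int closedV continuous_intros)
  have "D = V \<inter> D" using D_def by auto
  hence compD: "compact D" using compact_Int_closed[OF body(1) closedD] by simp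
  have f_cont: "continuous_on D f" unfolding f_def
    by (intro continuous_intros continuous_on_subset[OF eta_cont]) (auto simp: D_def)
  obtain ws where ws: "ws \<in> D" "\<forall>y\<in>D. f ws \<le> f y"
    using continuous_attains_inf[OF compD _ f_cont] v1D by blast
  have notVe: "\<And>v. v \<in> V \<Longrightarrow> v \<notin> Ve \<Longrightarrow> \<theta> v = \<eta> v \<and> \<eta> v > t0 + \<epsilon>"
    using th Ve_def' eps by fastforce
  have "ws \<notin> Ve" using ws(1) d0 D_def by auto
  hence fws: "f ws > 0" using notVe[of ws] ws(1) D_def f_def by auto
  have "f ws \<le> \<delta>" unfolding \<delta>_def by (rule cINF_greatest) (use ws v1D in auto)
  hence delta_pos: "\<delta> > 0" using fws by linarith
  have fD: "\<And>v. v \<in> D \<Longrightarrow> \<delta> \<le> f v"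
    unfolding \<delta>_def by (rule cINF_lower) (use ws in \<open>auto intro: bdd_belowI[where m="f ws"]\<close>)
  have main: "\<forall>v \<in> V - Ve. \<theta> v - t0 - \<epsilon> \<ge> min (cc * infdist v Ve) \<delta>"
  proof
    fix v assume v: "v \<in> V - Ve"
    have thv: "\<theta> v = \<eta> v" and etav: "\<eta> v > t0 + \<epsilon>" using notVe v by auto
    show "\<theta> v - t0 - \<epsilon> \<ge> min (cc * infdist v Ve) \<delta>"
    proof (cases "infdist v Ve \<ge> d0")
      case True
      hence "v \<in> D" using v D_def by auto
      thus ?thesis using fD thv f_def by fastforce
    next
      case False
      hence "Inf ((\<lambda>a. dist v a) ` Ve) < d0" using infdist_notempty[OF Vene] by simp
      then obtain w where w: "w \<in> Ve" "dist v w < d0"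
        using cInf_lessD[of "(\<lambda>a. dist v a) ` Ve" d0] Vene by auto
      have wV: "w \<in> V" using w Ve_def' by auto
      have segV: "closed_segment w v \<subseteq> V" using closed_segment_subset[OF wV _ body(2)] v by auto
      have conn: "connected (\<eta> ` closed_segment w v)"
        by (rule connected_continuous_image[OF continuous_on_subset[OF eta_cont segV] connected_segment])
      have "\<eta> w \<le> t0 + \<epsilon>" using w Ve_def' th[OF wV] by auto
      have "t0 + \<epsilon> \<in> \<eta> ` closed_segment w v"
        by (rule connectedD_interval[OF conn, of "\<eta> w" "\<eta> v"]) (use \<open>\<eta> w \<le> t0 + \<epsilon>\<close> etav in auto)
      then obtain p where p: "p \<in> closed_segment w v" "\<eta> p = t0 + \<epsilon>" by auto
      have pV: "p \<in> V" using p segV by auto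
      have pK: "p \<in> K" using p pV th[OF pV] eps K_def' by auto
      have pVe: "p \<in> Ve" using pK KVe by auto
      have "dist p v \<le> dist w v" using dist_in_closed_segment[OF p(1)] by auto
      hence vp: "dist v p < r/2" using w d0_def by (simp add: dist_commute)
      define e where "e = \<eta> v - t0 - \<epsilon>"
      have "cc * infdist v Ve \<le> e"
      proof (cases "e \<ge> cc * (r/2)")
        case True
        have "cc * infdist v Ve \<le> cc * d0" using False cc_pos by simp
        also have "\<dots> \<le> cc * (r/2)" using d0_def cc_pos by simp
        finally show ?thesis using True by linarith
      next
        case False
        define S where "S = e / cc"
        have S: "0 \<le> S" "S \<le> r/2" using False cc_pos etav
          by (auto simp: S_def e_def field_simps)
        have ballV: "ball p r \<subseteq> interior V" using r1 pVe r_def by fastforce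
        have der: "\<forall>x\<in>ball p r. (\<eta> has_derivative (\<lambda>h. g x \<bullet> h)) (at x)"
        proof
          fix x assume "x \<in> ball p r"
          hence "x \<in> interior V" using ballV by auto
          thus "(\<eta> has_derivative (\<lambda>h. g x \<bullet> h)) (at x)"
            using deriv interior_subset at_within_interior by (metis subsetD)
        qed
        have gc: "\<forall>x\<in>ball p r. norm (g x - g p) \<le> cc/2"
        proof
          fix x assume x: "x \<in> ball p r"
          hence "x \<in> V" using ballV interior_subset by blast
          moreover have "dist x p < r2" using x r_def by (auto simp: dist_commute)
          ultimately have "dist (g x) (g p) < cc/2" using r2 pV by blast
          thus "norm (g x - g p) \<le> cc/2" by (simp add: dist_norm)
        qed
        define n where "n = g p /\<^sub>R norm (g p)"
        have gp0: "norm (g p) > 0" using gK[OF pK] cc_pos by linarith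
        have nn: "norm n = 1" using gp0 by (simp add: n_def)
        define u where "u = v - S *\<^sub>R n"
        have "\<eta> u \<le> \<eta> v - cc * S"
          unfolding u_def n_def by (rule descent[OF der gc gK[OF pK] cc_pos vp S])
        hence etau: "\<eta> u \<le> t0 + \<epsilon>" using cc_pos by (simp add: S_def e_def)
        have "dist p u \<le> dist p v + dist v u" by (rule dist_triangle)
        also have "dist v u = S" using nn S by (simp add: u_def dist_norm)
        finally have "u \<in> ball p r" using vp S by (simp add: dist_commute)
        hence uV: "u \<in> V" using ballV interior_subset by blast
        have "u \<in> Ve" using uV etau th[OF uV] eps Ve_def' by auto
        hence "infdist v Ve \<le> dist v u" by (rule infdist_le)
        also have "dist v u = S" using nn S by (simp add: u_def dist_norm)
        finally show ?thesis using cc_pos by (simp add: S_def field_simps)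
      qed
      thus ?thesis using thv e_def by linarith
    qed
  qed
  show ?thesis
    apply (rule exI[of _ d0])
    unfolding Let_def
    using d0 cc_pos v1D delta_pos main
    apply (simp add: t0_def[symmetric] Ve_def[symmetric] K_def[symmetric] cc_def[symmetric]
        D_def[symmetric] f_def[symmetric] \<delta>_def[symmetric])
    apply blast
    done
qed

end
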